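(* Let $a>0$ and let $\theta_0,\theta_1,\theta_2\in\mathbb{R}$ be distinct. In the $(t,x)$-plane consider the points $P_i=\left(\theta_i,\tfrac12 a\theta_i^2\right)$, $i=0,1,2$, on the parabola $x=\tfrac12 at^2$. For $c>0$ equip the plane with the Minkowski inner product $u\cdot v=-c^2u_tv_t+u_xv_x$ associated to the metric $ds^2=-c^2dt^2+dx^2$. Then for all sufficiently large $c$ the chords $P_0P_1$ and $P_0P_2$ are timelike, and their pseudo-angle $\theta(c)\ge0$, defined by $\cosh^2(\theta(c))=\frac{(u\cdot v)^2}{(u\cdot u)(v\cdot v)}$ with $u=P_1-P_0$, $v=P_2-P_0$, satisfies $\cosh^2(\theta(c))\to1$ and $$\theta(c)^2\sim\frac{a^2}{4c^2}(\theta_1-\theta_2)^2\quad\text{as } c\to\infty,$$ an asymptotic which does not depend on $\theta_0$.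
   Context: A vector $u$ is timelike if $u\cdot u<0$. This parabola is the $c\to\infty$ limit of the hyperbolae $x=\frac{c^2}{a}(\cosh(a\theta/c)-1)$, $t=\frac{c}{a}\sinh(a\theta/c)$ (worldlines of constant proper acceleration $a$). *)

theory Defs
  imports "HOL-Analysis.Analysis" "HOL-Library.Landau_Symbols"
begin

definition mink :: "real \<Rightarrow> real \<times> real \<Rightarrow> real \<times> real \<Rightarrow> real" where
  "mink c u v = - (c^2) * fst u * fst v + snd u * snd v"

definition timelike :: "real \<Rightarrow> real \<times> real \<Rightarrow> bool" where
  "timelike c u \<longleftrightarrow> mink c u u < 0"

definition cosh_sq_ratio :: "real \<Rightarrow> real \<times> real \<Rightarrow> real \<times> real \<Rightarrow> real" where
  "cosh_sq_ratio c u v = (mink c u v)^2 / (mink c u u * mink c v v)"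

definition pseudo_angle :: "real \<Rightarrow> real \<times> real \<Rightarrow> real \<times> real \<Rightarrow> real" where
  "pseudo_angle c u v = arcosh (sqrt (cosh_sq_ratio c u v))"

definition parab_pt :: "real \<Rightarrow> real \<Rightarrow> real \<times> real" where
  "parab_pt a \<theta> = (\<theta>, a * \<theta>^2 / 2)"

end

theory Submission
  imports Defs "HOL-Real_Asymp.Real_Asymp"
begin

lemma sinh_equiv_at_right: "(\<lambda>x::real. sinh x) \<sim>[at_right 0] (\<lambda>x. x)"
  by real_asymp

lemma Q_equiv:
  fixes K p1 p2 :: real
  assumes "K > 0"
  shows "(\<lambda>c. c^2 * K / ((c^2 - p1^2) * (c^2 - p2^2))) \<sim>[at_top] (\<lambda>c. K / c^2)"
  using assms by real_asymp

lemma Q_lim: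
  fixes K p1 p2 :: real
  shows "((\<lambda>c. c^2 * K / ((c^2 - p1^2) * (c^2 - p2^2))) \<longlongrightarrow> 0) at_top"
  by real_asymp

theorem mainTheorem4:
  fixes a \<theta>0 \<theta>1 \<theta>2 :: real
  assumes "a > 0"
    and "\<theta>0 \<noteq> \<theta>1" "\<theta>0 \<noteq> \<theta>2" "\<theta>1 \<noteq> \<theta>2"
  defines "u \<equiv> parab_pt a \<theta>1 - parab_pt a \<theta>0"
    and "v \<equiv> parab_pt a \<theta>2 - parab_pt a \<theta>0"
  shows "eventually (\<lambda>c. c > 0 \<and> timelike c u \<and> timelike c v
            \<and> cosh (pseudo_angle c u v) ^ 2 = cosh_sq_ratio c u v) at_top \<and>
         ((\<lambda>c. cosh (pseudo_angle c u v) ^ 2) \<longlongrightarrow> 1) at_top \<and>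
         (\<lambda>c. (pseudo_angle c u v)^2) \<sim>[at_top]
           (\<lambda>c. a^2 / (4 * c^2) * (\<theta>1 - \<theta>2)^2)"
proof -
  define d1 where "d1 = \<theta>1 - \<theta>0"
  define d2 where "d2 = \<theta>2 - \<theta>0"
  define p1 where "p1 = a * (\<theta>1 + \<theta>0) / 2"
  define p2 where "p2 = a * (\<theta>2 + \<theta>0) / 2"
  define K where "K = a^2 * (\<theta>1 - \<theta>2)^2 / 4"
  define Q where "Q = (\<lambda>c::real. c^2 * K / ((c^2 - p1^2) * (c^2 - p2^2)))"
  define M where "M = \<bar>p1\<bar> + \<bar>p2\<bar> + 1"
  have d1: "d1 \<noteq> 0" and d2: "d2 \<noteq> 0" using assms by (auto simp: d1_def d2_def)
  have Kpos: "K > 0" using assms by (auto simp: K_def)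
  have u: "u = (d1, d1 * p1)"
    by (simp add: u_def parab_pt_def d1_def p1_def power2_eq_square algebra_simps)
  have v: "v = (d2, d2 * p2)"
    by (simp add: v_def parab_pt_def d2_def p2_def power2_eq_square algebra_simps)
  have uu: "mink c u u = d1^2 * (p1^2 - c^2)" for c
    by (simp add: u mink_def power2_eq_square algebra_simps)
  have vv: "mink c v v = d2^2 * (p2^2 - c^2)" for c
    by (simp add: v mink_def power2_eq_square algebra_simps)
  have uv: "mink c u v = d1 * d2 * (p1 * p2 - c^2)" for c
    by (simp add: u v mink_def power2_eq_square algebra_simps)
  have key: "c > M \<Longrightarrow> c > 0 \<and> timelike c u \<and> timelike c v \<and> Q c > 0 \<and>
      cosh_sq_ratio c u v = 1 + Q c" for c
  proof -
    assume c: "c > M"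
    have c0: "c > 0" using c by (simp add: M_def)
    have "\<bar>p1\<bar> < c" "\<bar>p2\<bar> < c" using c by (auto simp: M_def)
    hence "\<bar>p1\<bar>^2 < c^2" "\<bar>p2\<bar>^2 < c^2" using power_strict_mono[of "\<bar>p1\<bar>" c 2] power_strict_mono[of "\<bar>p2\<bar>" c 2] by auto
    hence h1: "p1^2 < c^2" and h2: "p2^2 < c^2" by simp_all
    hence n1: "c^2 - p1^2 > 0" and n2: "c^2 - p2^2 > 0" by auto
    have tl: "timelike c u" "timelike c v"
      using h1 h2 d1 d2 by (auto simp: timelike_def uu vv mult_pos_neg)
    have Qp: "Q c > 0" using n1 n2 Kpos c0 by (simp add: Q_def)
    have "cosh_sq_ratio c u v = (d1*d2)^2 * (p1*p2 - c^2)^2 / ((d1*d2)^2 * ((c^2 - p1^2) * (c^2 - p2^2)))"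
    proof -
      have e1: "(d1 * d2 * (p1 * p2 - c^2))^2 = (d1*d2)^2 * (p1*p2 - c^2)^2"
        by (simp add: power_mult_distrib)
      have e2: "d1^2 * (p1^2 - c^2) * (d2^2 * (p2^2 - c^2)) = (d1*d2)^2 * ((c^2 - p1^2) * (c^2 - p2^2))"
        by (simp add: power_mult_distrib algebra_simps)
      show ?thesis unfolding cosh_sq_ratio_def uu vv uv e1 e2 ..
    qed
    also have "\<dots> = (p1*p2 - c^2)^2 / ((c^2 - p1^2) * (c^2 - p2^2))"
      using d1 d2 by simp
    also have "\<dots> = 1 + Q c"
    proof -
      have pp: "p1 - p2 = a*(\<theta>1-\<theta>2)/2" by (simp add: p1_def p2_def field_simps)
      have KK: "K = (p1 - p2)^2"
        unfolding pp K_def by (simp add: power_divide power_mult_distrib)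
      have D: "(c^2 - p1^2) * (c^2 - p2^2) \<noteq> 0" using n1 n2 by simp
      have "(p1*p2 - c^2)^2 = (c^2 - p1^2) * (c^2 - p2^2) + c^2 * (p1 - p2)^2"
        by (simp add: power2_eq_square algebra_simps)
      thus ?thesis unfolding Q_def KK using D by (simp add: add_divide_distrib)
    qed
    finally show ?thesis using c0 tl Qp by simp
  qed
  have evk: "eventually (\<lambda>c. c > 0 \<and> timelike c u \<and> timelike c v \<and> Q c > 0 \<and>
      cosh_sq_ratio c u v = 1 + Q c) at_top"
    using eventually_gt_at_top[of M] by eventually_elim (rule key)
  have pa: "pseudo_angle c u v = arcosh (sqrt (1 + Q c))" if "cosh_sq_ratio c u v = 1 + Q c" for c
    using that by (simp add: pseudo_angle_def)
  have csq: "Q c > 0 \<Longrightarrow> cosh (arcosh (sqrt (1 + Q c)))^2 = 1 + Q c" for c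
    by simp
  have ev1: "eventually (\<lambda>c. c > 0 \<and> timelike c u \<and> timelike c v
            \<and> cosh (pseudo_angle c u v) ^ 2 = cosh_sq_ratio c u v) at_top"
    using evk by eventually_elim (auto simp: pa)
  have ev2: "eventually (\<lambda>c. cosh (pseudo_angle c u v) ^ 2 = 1 + Q c) at_top"
    using evk by eventually_elim (auto simp: pa)
  have Qlim: "(Q \<longlongrightarrow> 0) at_top" unfolding Q_def by (rule Q_lim)
  have lim2: "((\<lambda>c. cosh (pseudo_angle c u v) ^ 2) \<longlongrightarrow> 1) at_top"
  proof -
    have "((\<lambda>c. 1 + Q c) \<longlongrightarrow> 1 + 0) at_top" by (intro tendsto_intros Qlim)
    then show ?thesis using ev2 by (simp add: tendsto_cong)
  qed
  define t where "t = (\<lambda>c. pseudo_angle c u v)"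
  have evt: "eventually (\<lambda>c. t c > 0 \<and> sinh (t c) ^ 2 = Q c) at_top"
    using evk
  proof eventually_elim
    case (elim c)
    have ge: "sqrt (1 + Q c) \<ge> 1" using elim by simp
    have ne: "sqrt (1 + Q c) \<noteq> 1" using elim by simp
    have "t c = arcosh (sqrt (1 + Q c))" using elim by (simp add: t_def pa)
    moreover have "arcosh (sqrt (1 + Q c)) > 0" using ge ne by simp
    moreover have "sinh (arcosh (sqrt (1 + Q c)))^2 = Q c"
      using ge elim by (simp add: sinh_arcosh_real)
    ultimately show ?case by simp
  qed
  have tlim: "(t \<longlongrightarrow> 0) at_top"
  proof -
    have "((\<lambda>c. arcosh (sqrt (1 + Q c))) \<longlongrightarrow> arcosh (sqrt (1 + 0))) at_top"
    proof (rule tendsto_arcosh_strong)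
      show "((\<lambda>c. sqrt (1 + Q c)) \<longlongrightarrow> sqrt (1 + 0)) at_top"
        by (intro tendsto_intros Qlim)
      show "eventually (\<lambda>c. sqrt (1 + Q c) \<ge> 1) at_top"
        using evk by eventually_elim simp
    qed simp
    moreover have "eventually (\<lambda>c. arcosh (sqrt (1 + Q c)) = t c) at_top"
      using evk by eventually_elim (simp add: t_def pa)
    ultimately show ?thesis by (simp add: tendsto_cong)
  qed
  have tfl: "filterlim t (at_right 0) at_top"
    by (rule tendsto_imp_filterlim_at_right[OF tlim]) (use evt in \<open>auto elim: eventually_mono\<close>)
  have "(\<lambda>c. sinh (t c)) \<sim>[at_top] t"
    using asymp_equiv_compose'[OF sinh_equiv_at_right tfl] by simp
  hence "(\<lambda>c. t c ^ 2) \<sim>[at_top] (\<lambda>c. sinh (t c) ^ 2)"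
    by (intro asymp_equiv_power) (simp add: asymp_equiv_sym)
  also have "(\<lambda>c. sinh (t c) ^ 2) \<sim>[at_top] Q"
    using evt by (intro asymp_equiv_refl_ev) (auto elim: eventually_mono)
  also have "Q \<sim>[at_top] (\<lambda>c. K / c^2)"
    unfolding Q_def by (rule Q_equiv[OF Kpos])
  also have "(\<lambda>c. K / c^2) = (\<lambda>c. a^2 / (4 * c^2) * (\<theta>1 - \<theta>2)^2)"
    by (simp add: K_def fun_eq_iff)
  finally have "(\<lambda>c. t c ^ 2) \<sim>[at_top] (\<lambda>c. a^2 / (4 * c^2) * (\<theta>1 - \<theta>2)^2)" .
  thus ?thesis using ev1 lim2 by (simp add: t_def)
qed

end
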